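(* Let $G$ be a finite simple connected graph without isolated vertices. Then Dom has a winning strategy in the Sepy-start Disjoint Domination Game on $G$ even when Sepy is allowed to pass at any time except in the first move of the game (Dom not passing).
   Context: For a vertex $v$, $N[v]$ denotes its closed neighborhood. The Disjoint Domination Game on an isolate-free graph $G$ is played by Dom and Sepy with colors $p$ and $b$; $V_p,V_b$ denote the current sets of vertices of each color. Players alternate; either player may use either color. A move chooses a vertex $v$ and a color $c$ such that (i) $v$ is uncolored and (ii) some $u\in N[v]$ satisfies $N[u]\cap V_c=\emptyset$ (before the move); then $v$ gets color $c$. In this variant Sepy may pass instead of moving on any of his turns except the first move of the game, which is Sepy's. The game ends as soon as either (s* ) some vertex $v$ has $N[v]\subseteq V_p$ or $N[v]\subseteq V_b$ — Sepy wins; or (d* ) both $V_p$ and $V_b$ are dominating sets of $G$ — Dom wins. *)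

theory Defs
  imports Main
begin

definition simple_graph :: "'a set \<Rightarrow> ('a \<Rightarrow> 'a \<Rightarrow> bool) \<Rightarrow> bool" where
  "simple_graph V E \<longleftrightarrow> finite V \<and> (\<forall>u v. E u v \<longrightarrow> u \<in> V \<and> v \<in> V)
     \<and> (\<forall>u v. E u v \<longrightarrow> E v u) \<and> (\<forall>v. \<not> E v v)"

definition connected_graph :: "'a set \<Rightarrow> ('a \<Rightarrow> 'a \<Rightarrow> bool) \<Rightarrow> bool" where
  "connected_graph V E \<longleftrightarrow> (\<forall>u\<in>V. \<forall>v\<in>V. E\<^sup>*\<^sup>* u v)"

definition isolate_free :: "'a set \<Rightarrow> ('a \<Rightarrow> 'a \<Rightarrow> bool) \<Rightarrow> bool" where
  "isolate_free V E \<longleftrightarrow> (\<forall>v\<in>V. \<exists>u. E v u)"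

definition cnbh :: "('a \<Rightarrow> 'a \<Rightarrow> bool) \<Rightarrow> 'a \<Rightarrow> 'a set" where
  "cnbh E v = insert v {u. E v u}"

definition dominating :: "'a set \<Rightarrow> ('a \<Rightarrow> 'a \<Rightarrow> bool) \<Rightarrow> 'a set \<Rightarrow> bool" where
  "dominating V E D \<longleftrightarrow> (\<forall>v\<in>V. cnbh E v \<inter> D \<noteq> {})"

datatype colour = Pc | Bc

type_synonym 'a pos = "'a set \<times> 'a set"

fun cls :: "'a pos \<Rightarrow> colour \<Rightarrow> 'a set" where
  "cls (P, B) Pc = P"
| "cls (P, B) Bc = B"

fun paint :: "'a pos \<Rightarrow> 'a \<Rightarrow> colour \<Rightarrow> 'a pos" where
  "paint (P, B) v Pc = (insert v P, B)"
| "paint (P, B) v Bc = (P, insert v B)"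

definition legal_move :: "'a set \<Rightarrow> ('a \<Rightarrow> 'a \<Rightarrow> bool) \<Rightarrow> 'a pos \<Rightarrow> 'a \<Rightarrow> colour \<Rightarrow> bool" where
  "legal_move V E s v c \<longleftrightarrow> v \<in> V \<and> v \<notin> fst s \<and> v \<notin> snd s
     \<and> (\<exists>u\<in>cnbh E v. cnbh E u \<inter> cls s c = {})"

definition sepy_won :: "'a set \<Rightarrow> ('a \<Rightarrow> 'a \<Rightarrow> bool) \<Rightarrow> 'a pos \<Rightarrow> bool" where
  "sepy_won V E s \<longleftrightarrow> (\<exists>v\<in>V. cnbh E v \<subseteq> fst s \<or> cnbh E v \<subseteq> snd s)"

definition dom_won :: "'a set \<Rightarrow> ('a \<Rightarrow> 'a \<Rightarrow> bool) \<Rightarrow> 'a pos \<Rightarrow> bool" where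
  "dom_won V E s \<longleftrightarrow> dominating V E (fst s) \<and> dominating V E (snd s)"

text \<open>Positions from which Dom can force a win (the game is finite, so the least
fixed point below is exactly the set of positions where Dom has a winning strategy).
dom_wins_D: Dom is to move (Dom may not pass).
dom_wins_S pass_ok: Sepy is to move; Sepy may pass iff pass_ok.\<close>
inductive dom_wins_D :: "'a set \<Rightarrow> ('a \<Rightarrow> 'a \<Rightarrow> bool) \<Rightarrow> 'a pos \<Rightarrow> bool"
  and dom_wins_S :: "'a set \<Rightarrow> ('a \<Rightarrow> 'a \<Rightarrow> bool) \<Rightarrow> bool \<Rightarrow> 'a pos \<Rightarrow> bool"
  for V E where
  D_end: "\<not> sepy_won V E s \<Longrightarrow> dom_won V E s \<Longrightarrow> dom_wins_D V E s"
| D_move: "\<not> sepy_won V E s \<Longrightarrow> legal_move V E s v c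
     \<Longrightarrow> dom_wins_S V E True (paint s v c) \<Longrightarrow> dom_wins_D V E s"
| S_end: "\<not> sepy_won V E s \<Longrightarrow> dom_won V E s \<Longrightarrow> dom_wins_S V E p s"
| S_move: "\<not> sepy_won V E s
     \<Longrightarrow> (\<forall>v c. legal_move V E s v c \<longrightarrow> dom_wins_D V E (paint s v c))
     \<Longrightarrow> (p \<longrightarrow> dom_wins_D V E s) \<Longrightarrow> dom_wins_S V E p s"

end

theory Submission
  imports Defs
begin

fun oth :: "colour \<Rightarrow> colour" where "oth Pc = Bc" | "oth Bc = Pc"

lemma oth_oth[simp]: "oth (oth c) = c" by (cases c) auto
lemma oth_ne[simp]: "oth c \<noteq> c" "c \<noteq> oth c" by (cases c; auto)+
lemma ne_oth: "d \<noteq> c \<Longrightarrow> d = oth c" by (cases c; cases d) auto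

lemma cls_fst: "cls s Pc = fst s" "cls s Bc = snd s" by (cases s, auto)+

lemma cls_paint: "cls (paint s v c) d = (if d = c then insert v (cls s d) else cls s d)"
  by (cases s; cases c; cases d) auto

lemma fst_paint[simp]: "fst (paint s v c) = (if c = Pc then insert v (fst s) else fst s)"
  by (cases s; cases c) auto
lemma snd_paint[simp]: "snd (paint s v c) = (if c = Bc then insert v (snd s) else snd s)"
  by (cases s; cases c) auto

lemma uncol: "v \<notin> fst s \<Longrightarrow> v \<notin> snd s \<Longrightarrow> v \<notin> cls s d"
  by (cases d) (auto simp: cls_fst)

definition good :: "'a set \<Rightarrow> ('a \<Rightarrow> 'a \<Rightarrow> bool) \<Rightarrow> 'a pos \<Rightarrow> bool" where
  "good V E s \<longleftrightarrow> fst s \<inter> snd s = {} \<and> fst s \<subseteq> V \<and> snd s \<subseteq> V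
     \<and> (\<forall>c. \<forall>x\<in>cls s c. \<exists>y. E x y \<and> y \<in> cls s (oth c))"

lemma good_disj: "good V E s \<Longrightarrow> x \<in> cls s c \<Longrightarrow> x \<in> cls s (oth c) \<Longrightarrow> False"
  unfolding good_def by (cases c) (auto simp: cls_fst)

lemma cnbh_self: "v \<in> cnbh E v" by (simp add: cnbh_def)

lemma good_not_won:
  assumes "good V E s" shows "\<not> sepy_won V E s"
proof
  assume "sepy_won V E s"
  then obtain v c where v: "cnbh E v \<subseteq> cls s c"
    unfolding sepy_won_def by (metis cls_fst)
  then have "v \<in> cls s c" using cnbh_self[of v E] by (rule subsetD)
  then obtain y where "E v y" "y \<in> cls s (oth c)" using assms unfolding good_def by blast
  moreover have "y \<in> cls s c" using v \<open>E v y\<close> by (auto simp: cnbh_def)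
  ultimately show False using good_disj[OF assms] by blast
qed

lemma sepy_won_mono: "sepy_won V E s \<Longrightarrow> sepy_won V E (paint s w d)"
  unfolding sepy_won_def by auto

lemma cls_mono: "x \<in> cls s d \<Longrightarrow> x \<in> cls (paint s v c) d"
  by (auto simp: cls_paint)

lemma cls_paint_cases: "x \<in> cls (paint s v c) d \<Longrightarrow> x \<in> cls s d \<or> (x = v \<and> d = c)"
  by (auto simp: cls_paint split: if_splits)

lemma good_intro:
  assumes "fst s' \<inter> snd s' = {}" "fst s' \<subseteq> V" "snd s' \<subseteq> V"
    "\<And>d x. x \<in> cls s' d \<Longrightarrow> \<exists>y. E x y \<and> y \<in> cls s' (oth d)"
  shows "good V E s'"
  using assms unfolding good_def by blast

lemma good_wit: "good V E s \<Longrightarrow> x \<in> cls s d \<Longrightarrow> \<exists>y. E x y \<and> y \<in> cls s (oth d)"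
  unfolding good_def by blast

lemma good_paint:
  assumes g: "good V E s" and lm: "legal_move V E s v c" and "E v y" "y \<in> cls s (oth c)"
  shows "good V E (paint s v c)"
proof (rule good_intro)
  show "fst (paint s v c) \<inter> snd (paint s v c) = {}" "fst (paint s v c) \<subseteq> V" "snd (paint s v c) \<subseteq> V"
    using g lm unfolding good_def legal_move_def by (cases c; auto)+
  fix d x assume x: "x \<in> cls (paint s v c) d"
  show "\<exists>y. E x y \<and> y \<in> cls (paint s v c) (oth d)"
  proof (cases "x \<in> cls s d")
    case True then show ?thesis using good_wit[OF g] cls_mono by metis
  next
    case False then have "x = v" "d = c" using cls_paint_cases[OF x] by auto
    then show ?thesis using assms(3,4) cls_mono by metis
  qed
qed

lemma fix_reply:
  assumes sg: "simple_graph V E" and isf: "isolate_free V E"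
    and g: "good V E s" and lm: "legal_move V E s v c"
    and no: "\<not> (\<exists>y. E v y \<and> y \<in> cls s (oth c))"
  shows "\<exists>w. legal_move V E (paint s v c) w (oth c) \<and> good V E (paint (paint s v c) w (oth c))"
proof -
  have vV: "v \<in> V" and vf: "v \<notin> fst s" and vs: "v \<notin> snd s"
    using lm by (auto simp: legal_move_def)
  obtain u where u: "u \<in> cnbh E v" "cnbh E u \<inter> cls s c = {}"
    using lm by (auto simp: legal_move_def)
  have "\<exists>w. E v w \<and> w \<notin> fst s \<and> w \<notin> snd s"
  proof (rule ccontr)
    assume A: "\<not> ?thesis"
    have allc: "E v w \<Longrightarrow> w \<in> cls s c" for w
      using A no by (cases c) (auto simp: cls_fst)
    show False
    proof (cases "u = v")
      case True
      obtain w where "E v w" using isf vV by (auto simp: isolate_free_def)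
      then show False using u True allc by (auto simp: cnbh_def)
    next
      case False
      then have "E v u" using u by (auto simp: cnbh_def)
      then have "u \<in> cls s c" by (rule allc)
      then show False using u(2) cnbh_self[of u E] by (metis IntI empty_iff)
    qed
  qed
  then obtain w where w: "E v w" "w \<notin> fst s" "w \<notin> snd s" by blast
  have wv: "w \<noteq> v" using w sg by (auto simp: simple_graph_def)
  have wV: "w \<in> V" and Ewv: "E w v" using w sg by (auto simp: simple_graph_def)
  have voth: "v \<notin> cls s (oth c)" using uncol[OF vf vs] by blast
  let ?s' = "paint s v c"
  have lm2: "legal_move V E ?s' w (oth c)"
    unfolding legal_move_def
  proof (intro conjI)
    show "w \<in> V" by (rule wV)
    show "w \<notin> fst ?s'" "w \<notin> snd ?s'" using w wv by auto
    have "v \<in> cnbh E w" using Ewv by (simp add: cnbh_def)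
    moreover have "cnbh E v \<inter> cls ?s' (oth c) = {}"
      using no voth by (auto simp: cls_paint cnbh_def)
    ultimately show "\<exists>u\<in>cnbh E w. cnbh E u \<inter> cls ?s' (oth c) = {}" by blast
  qed
  have "good V E (paint ?s' w (oth c))"
  proof (rule good_intro)
    show "fst (paint ?s' w (oth c)) \<inter> snd (paint ?s' w (oth c)) = {}"
      "fst (paint ?s' w (oth c)) \<subseteq> V" "snd (paint ?s' w (oth c)) \<subseteq> V"
      using g vV vf vs wV w wv unfolding good_def by (cases c; auto)+
    fix d x assume x: "x \<in> cls (paint ?s' w (oth c)) d"
    show "\<exists>y. E x y \<and> y \<in> cls (paint ?s' w (oth c)) (oth d)"
    proof (cases "x \<in> cls s d")
      case True then show ?thesis using good_wit[OF g] cls_mono by metis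
    next
      case False
      then have "(x = v \<and> d = c) \<or> (x = w \<and> d = oth c)"
        using False cls_paint_cases[OF x] cls_paint_cases[of x s v c d] by blast
      then show ?thesis
      proof
        assume "x = v \<and> d = c"
        moreover have "w \<in> cls (paint ?s' w (oth c)) (oth c)" by (simp add: cls_paint)
        ultimately show ?thesis using w(1) by blast
      next
        assume "x = w \<and> d = oth c"
        moreover have "v \<in> cls (paint ?s' w (oth c)) c" by (simp add: cls_paint)
        ultimately show ?thesis using Ewv by auto
      qed
    qed
  qed
  then show ?thesis using lm2 by blast
qed

lemma crossing:
  assumes "E\<^sup>*\<^sup>* a b" "a \<in> W" "b \<notin> W"
  shows "\<exists>x z. x \<in> W \<and> E x z \<and> z \<notin> W"
  using assms by (induction rule: rtranclp_induct) auto

lemma dom_move: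
  assumes sg: "simple_graph V E" and cn: "connected_graph V E"
    and g: "good V E s" and ne: "fst s \<union> snd s \<noteq> {}" and nd: "\<not> dom_won V E s"
  shows "\<exists>w c. legal_move V E s w c \<and> good V E (paint s w c)"
proof -
  obtain u c where uV: "u \<in> V" and u: "cnbh E u \<inter> cls s c = {}"
    using nd unfolding dom_won_def dominating_def by (metis cls_fst)
  show ?thesis
  proof (cases "\<exists>y\<in>cnbh E u. y \<in> fst s \<union> snd s")
    case True
    then obtain y where y: "y \<in> cnbh E u" "y \<in> fst s \<union> snd s" by blast
    have yo: "y \<in> cls s (oth c)" using y u by (cases c) (auto simp: cls_fst)
    have uf: "u \<notin> fst s \<and> u \<notin> snd s"
    proof (rule ccontr)
      assume "\<not> ?thesis"
      then obtain d where d: "u \<in> cls s d" by (metis cls_fst)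
      have "d \<noteq> c" using d u cnbh_self[of u E] by blast
      then have "d = oth c" by (rule ne_oth)
      then obtain z where "E u z" "z \<in> cls s c" using g d unfolding good_def by fastforce
      then show False using u by (auto simp: cnbh_def)
    qed
    have "y \<noteq> u" using y uf by auto
    then have Euy: "E u y" using y by (auto simp: cnbh_def)
    have lm: "legal_move V E s u c"
      unfolding legal_move_def using uV uf u cnbh_self[of u E] by blast
    show ?thesis using good_paint[OF g lm Euy yo] lm by blast
  next
    case False
    define W where "W = {x\<in>V. \<forall>z\<in>cnbh E x. z \<notin> fst s \<union> snd s}"
    have uW: "u \<in> W" using False uV by (auto simp: W_def)
    obtain y0 where y0: "y0 \<in> fst s \<union> snd s" using ne by blast
    have y0V: "y0 \<in> V" using y0 g by (auto simp: good_def)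
    have y0W: "y0 \<notin> W" using y0 cnbh_self[of y0 E] by (auto simp: W_def)
    have "E\<^sup>*\<^sup>* u y0" using cn uV y0V by (auto simp: connected_graph_def)
    then obtain x z where xz: "x \<in> W" "E x z" "z \<notin> W" using crossing[OF _ uW y0W] by blast
    have zV: "z \<in> V" and Ezx: "E z x" using xz sg by (auto simp: simple_graph_def)
    have zu: "z \<notin> fst s \<union> snd s" using xz by (auto simp: W_def cnbh_def)
    then obtain y where y: "y \<in> cnbh E z" "y \<in> fst s \<union> snd s" using zV xz by (auto simp: W_def)
    have "y \<noteq> z" using y zu by auto
    then have Ezy: "E z y" using y by (auto simp: cnbh_def)
    obtain d where d: "y \<in> cls s d" using y by (metis Un_iff cls_fst)
    have lm: "legal_move V E s z (oth d)"
      unfolding legal_move_def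
    proof (intro conjI)
      show "z \<in> V" "z \<notin> fst s" "z \<notin> snd s" using zV zu by auto
      have "x \<in> cnbh E z" using Ezx by (simp add: cnbh_def)
      moreover have "cnbh E x \<inter> cls s (oth d) = {}"
        using xz(1) unfolding W_def by (cases "oth d") (auto simp: cls_fst)
      ultimately show "\<exists>u\<in>cnbh E z. cnbh E u \<inter> cls s (oth d) = {}" by blast
    qed
    show ?thesis using good_paint[OF g lm Ezy] d lm by auto
  qed
qed

lemma card_paint:
  assumes "finite V" "legal_move V E s v c"
  shows "card (V - (fst (paint s v c) \<union> snd (paint s v c))) < card (V - (fst s \<union> snd s))"
proof -
  have "V - (fst (paint s v c) \<union> snd (paint s v c)) = (V - (fst s \<union> snd s)) - {v}"
    by (cases c) auto
  moreover have "v \<in> V - (fst s \<union> snd s)" using assms(2) by (auto simp: legal_move_def)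
  ultimately show ?thesis using assms(1) by (metis card_Diff1_less finite_Diff)
qed

lemma main:
  assumes sg: "simple_graph V E" and cn: "connected_graph V E" and isf: "isolate_free V E"
  shows "good V E s \<Longrightarrow> fst s \<union> snd s \<noteq> {} \<Longrightarrow> dom_wins_D V E s \<and> dom_wins_S V E True s"
proof (induct "card (V - (fst s \<union> snd s))" arbitrary: s rule: less_induct)
  case less
  have fin: "finite V" using sg by (simp add: simple_graph_def)
  have nsw: "\<not> sepy_won V E s" using good_not_won[OF less.prems(1)] .
  have D: "dom_wins_D V E s"
  proof (cases "dom_won V E s")
    case True then show ?thesis using nsw by (rule dom_wins_D_dom_wins_S.D_end[rotated])
  next
    case False
    then obtain w c where wc: "legal_move V E s w c" "good V E (paint s w c)"
      using dom_move[OF sg cn less.prems] by blast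
    have "fst (paint s w c) \<union> snd (paint s w c) \<noteq> {}" by (cases c) auto
    then have "dom_wins_S V E True (paint s w c)"
      using less.hyps[OF card_paint[OF fin wc(1)] wc(2)] by blast
    then show ?thesis using nsw wc(1) by (rule dom_wins_D_dom_wins_S.D_move[rotated 2])
  qed
  have "dom_wins_D V E (paint s v c)" if lm: "legal_move V E s v c" for v c
  proof (cases "\<exists>y. E v y \<and> y \<in> cls s (oth c)")
    case True
    then obtain y where "E v y" "y \<in> cls s (oth c)" by blast
    then have g': "good V E (paint s v c)" by (rule good_paint[OF less.prems(1) lm])
    have "fst (paint s v c) \<union> snd (paint s v c) \<noteq> {}" by (cases c) auto
    then show ?thesis using less.hyps[OF card_paint[OF fin lm] g'] by blast
  next
    case False
    then obtain w where w: "legal_move V E (paint s v c) w (oth c)"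
      "good V E (paint (paint s v c) w (oth c))"
      using fix_reply[OF sg isf less.prems(1) lm] by blast
    have lt: "card (V - (fst (paint (paint s v c) w (oth c)) \<union> snd (paint (paint s v c) w (oth c))))
       < card (V - (fst s \<union> snd s))"
      using card_paint[OF fin w(1)] card_paint[OF fin lm] by linarith
    have "fst (paint (paint s v c) w (oth c)) \<union> snd (paint (paint s v c) w (oth c)) \<noteq> {}"
      by (cases "oth c") auto
    then have S: "dom_wins_S V E True (paint (paint s v c) w (oth c))"
      using less.hyps[OF lt w(2)] by blast
    have "\<not> sepy_won V E (paint s v c)"
      using good_not_won[OF w(2)] sepy_won_mono[of V E "paint _ v c" w "oth c"] by blast
    then show ?thesis using w(1) S by (rule dom_wins_D_dom_wins_S.D_move)
  qed
  then have "dom_wins_S V E True s"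
    using nsw D by (intro dom_wins_D_dom_wins_S.S_move) auto
  then show ?case using D by blast
qed

theorem mainTheorem8:
  fixes V :: "'a set" and E :: "'a \<Rightarrow> 'a \<Rightarrow> bool"
  assumes "simple_graph V E" and "connected_graph V E" and "isolate_free V E"
  shows "dom_wins_S V E False ({}, {})"
proof -
  have g0: "good V E ({}, {})" proof (rule good_intro)
    fix d and x :: 'a assume "x \<in> cls ({}, {}) d" then show "\<exists>y. E x y \<and> y \<in> cls ({}, {}) (oth d)" by (cases d) auto
  qed auto
  have nsw: "\<not> sepy_won V E ({}, {})" using good_not_won[OF g0] .
  have "dom_wins_D V E (paint ({}, {}) v c)" if lm: "legal_move V E ({}, {}) v c" for v c
  proof -
    have no: "\<not> (\<exists>y. E v y \<and> y \<in> cls ({}, {}) (oth c))" by (cases "oth c") auto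
    obtain w where w: "legal_move V E (paint ({}, {}) v c) w (oth c)"
      "good V E (paint (paint ({}, {}) v c) w (oth c))"
      using fix_reply[OF assms(1) assms(3) g0 lm no] by blast
    have "fst (paint (paint ({}, {}) v c) w (oth c)) \<union> snd (paint (paint ({}, {}) v c) w (oth c)) \<noteq> {}"
      by (cases "oth c") auto
    then have S: "dom_wins_S V E True (paint (paint ({}, {}) v c) w (oth c))"
      using main[OF assms w(2)] by blast
    have "\<not> sepy_won V E (paint ({}, {}) v c)"
      using good_not_won[OF w(2)] sepy_won_mono[of V E "paint _ v c" w "oth c"] by blast
    then show ?thesis using w(1) S by (rule dom_wins_D_dom_wins_S.D_move)
  qed
  then show ?thesis using nsw by (intro dom_wins_D_dom_wins_S.S_move) auto
qed

end
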